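(* Let $S$ be a self-adjoint subspace in $X^2$ and $A$ a closed Hermitian subspace in $X^2$ with $D(S)\subset D(A)$. If $A_s$ is $S_s$-bounded with $S_s$-bound less than $1$, then $S+A$ is a self-adjoint subspace in $X^2$.
   Context: $X$ is a complex Hilbert space and $X^2=X\times X$ carries the inner product $\langle (x,f),(y,g)\rangle=\langle x,y\rangle+\langle f,g\rangle$. A subspace $T$ in $X^2$ means a linear subspace of $X^2$ (a linear relation); a linear operator in $X$ is identified with its graph. Notation: $D(T)=\{x:(x,f)\in T \text{ for some } f\}$, $T(x)=\{f:(x,f)\in T\}$. The adjoint is $T^*=\{(y,g)\in X^2:\langle g,x\rangle=\langle y,f\rangle \text{ for all }(x,f)\in T\}$; $T$ is Hermitian if $T\subset T^*$ and self-adjoint if $T=T^*$. For subspaces $S,A$ in $X^2$, $S+A=\{(x,f+g):(x,f)\in S,(x,g)\in A\}$. For a closed subspace $T$, set $T_\infty=\{(0,g)\in X^2:(0,g)\in T\}$ and $T_s=T\ominus T_\infty$ (orthogonal complement of $T_\infty$ in $T$), so $T=T_s\oplus T_\infty$; $T_s$ is the graph of a linear operator (the operator part of $T$) with $D(T_s)=D(T)$ and $R(T_s)\subset T(0)^\perp$. For linear operators $U,V$ in $X$: $U$ is $V$-bounded if $D(V)\subset D(U)$ and there is $c\ge0$ with $\|Ux\|\le c(\|x\|+\|Vx\|)$ for $x\in D(V)$; the $V$-bound of $U$ is the infimum of all $a\ge 0$ for which some $b\ge0$ satisfies $\|Ux\|\le a\|Vx\|+b\|x\|$ for all $x\in D(V)$.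 *)

theory Defs
  imports "HOL-Analysis.Analysis"
begin

class scaleC =
  fixes scaleC :: "complex \<Rightarrow> 'a \<Rightarrow> 'a" (infixr \<open>*\<^sub>C\<close> 75)

class complex_vector = real_vector + scaleC +
  assumes scaleC_add_right: "a *\<^sub>C (x + y) = a *\<^sub>C x + a *\<^sub>C y"
    and scaleC_add_left: "(a + b) *\<^sub>C x = a *\<^sub>C x + b *\<^sub>C x"
    and scaleC_scaleC: "a *\<^sub>C (b *\<^sub>C x) = (a * b) *\<^sub>C x"
    and scaleC_one: "1 *\<^sub>C x = x"
    and scaleR_scaleC: "scaleR r x = (complex_of_real r) *\<^sub>C x"

class complex_inner = complex_vector + real_normed_vector +
  fixes cinner :: "'a \<Rightarrow> 'a \<Rightarrow> complex"
  assumes cinner_commute: "cinner x y = cnj (cinner y x)"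
    and cinner_add_left: "cinner (x + y) z = cinner x z + cinner y z"
    and cinner_scaleC_left: "cinner (a *\<^sub>C x) y = a * cinner x y"
    and cinner_ge_zero: "Im (cinner x x) = 0 \<and> 0 \<le> Re (cinner x x)"
    and cinner_eq_zero_iff: "cinner x x = 0 \<longleftrightarrow> x = 0"
    and norm_eq_sqrt_cinner: "norm x = sqrt (Re (cinner x x))"

class chilbert_space = complex_inner + complete_space

definition lin_subspace :: "('a::complex_vector \<times> 'a) set \<Rightarrow> bool" where
  "lin_subspace T \<longleftrightarrow> (0, 0) \<in> T
     \<and> (\<forall>x f y g. (x, f) \<in> T \<longrightarrow> (y, g) \<in> T \<longrightarrow> (x + y, f + g) \<in> T)
     \<and> (\<forall>c x f. (x, f) \<in> T \<longrightarrow> (c *\<^sub>C x, c *\<^sub>C f) \<in> T)"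

definition pinner :: "('a::complex_inner \<times> 'a) \<Rightarrow> ('a \<times> 'a) \<Rightarrow> complex" where
  "pinner p q = cinner (fst p) (fst q) + cinner (snd p) (snd q)"

definition rdom :: "('a \<times> 'a) set \<Rightarrow> 'a set" where
  "rdom T = {x. \<exists>f. (x, f) \<in> T}"

definition rapp :: "('a \<times> 'a) set \<Rightarrow> 'a \<Rightarrow> 'a set" where
  "rapp T x = {f. (x, f) \<in> T}"

definition radj :: "('a::complex_inner \<times> 'a) set \<Rightarrow> ('a \<times> 'a) set" where
  "radj T = {(y, g). \<forall>x f. (x, f) \<in> T \<longrightarrow> cinner g x = cinner y f}"

definition hermitian :: "('a::complex_inner \<times> 'a) set \<Rightarrow> bool" where
  "hermitian T \<longleftrightarrow> lin_subspace T \<and> T \<subseteq> radj T"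

definition self_adjoint :: "('a::complex_inner \<times> 'a) set \<Rightarrow> bool" where
  "self_adjoint T \<longleftrightarrow> lin_subspace T \<and> T = radj T"

definition rsum :: "('a::plus \<times> 'a) set \<Rightarrow> ('a \<times> 'a) set \<Rightarrow> ('a \<times> 'a) set" where
  "rsum S A = {(x, f + g) | x f g. (x, f) \<in> S \<and> (x, g) \<in> A}"

definition rinf :: "('a::zero \<times> 'a) set \<Rightarrow> ('a \<times> 'a) set" where
  "rinf T = {p. p \<in> T \<and> fst p = 0}"

text \<open>Operator part T_s = T \<ominus> T_\<infinity> (orthogonal complement of T_\<infinity> in T).\<close>
definition rop :: "('a::complex_inner \<times> 'a) set \<Rightarrow> ('a \<times> 'a) set" where
  "rop T = {p \<in> T. \<forall>q \<in> rinf T. pinner p q = 0}"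

definition rel_bounded :: "('a::complex_inner \<times> 'a) set \<Rightarrow> ('a \<times> 'a) set \<Rightarrow> bool" where
  "rel_bounded U V \<longleftrightarrow> rdom V \<subseteq> rdom U \<and>
     (\<exists>c\<ge>0. \<forall>x u v. (x, u) \<in> U \<longrightarrow> (x, v) \<in> V \<longrightarrow> norm u \<le> c * (norm x + norm v))"

definition rel_bound :: "('a::complex_inner \<times> 'a) set \<Rightarrow> ('a \<times> 'a) set \<Rightarrow> real" where
  "rel_bound U V = Inf {a. a \<ge> 0 \<and> (\<exists>b\<ge>0. \<forall>x u v. (x, u) \<in> U \<longrightarrow> (x, v) \<in> V \<longrightarrow>
       norm u \<le> a * norm v + b * norm x)}"

end

theory Submission
  imports Defs
begin




lemma scaleC_zero_left[simp]: "(0::complex) *\<^sub>C (x::'a::complex_vector) = 0"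
  using scaleR_scaleC[of 0 x] by simp
lemma scaleC_minus1: "(-1::complex) *\<^sub>C (x::'a::complex_vector) = - x"
  using scaleR_scaleC[of "-1" x] by simp
lemma scaleC_zero_right[simp]: "(a::complex) *\<^sub>C (0::'a::complex_vector) = 0"
  using scaleC_add_right[of a 0 0] by simp
lemma scaleC_minus_right: "(a::complex) *\<^sub>C (- x::'a::complex_vector) = - (a *\<^sub>C x)"
  using scaleC_add_right[of a x "-x"] by (simp add: add_eq_0_iff)
lemma scaleC_diff_right: "(a::complex) *\<^sub>C (x - y::'a::complex_vector) = a *\<^sub>C x - a *\<^sub>C y"
  by (simp only: diff_conv_add_uminus scaleC_add_right scaleC_minus_right)
lemma scaleC_minus_left: "(- a::complex) *\<^sub>C (x::'a::complex_vector) = - (a *\<^sub>C x)"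
  using scaleC_scaleC[of "-1" a x] by (simp add: scaleC_minus1)

lemma cinner_add_right: "cinner x (y + z) = cinner x y + cinner (x::'a::complex_inner) z"
proof -
  have "cinner x (y + z) = cnj (cinner (y + z) x)" by (rule cinner_commute)
  also have "\<dots> = cnj (cinner y x) + cnj (cinner z x)" by (simp only: cinner_add_left complex_cnj_add)
  also have "\<dots> = cinner x y + cinner x z" by (simp only: cinner_commute[of x y] cinner_commute[of x z] complex_cnj_cnj)
  finally show ?thesis .
qed
lemma cinner_scaleC_right: "cinner x (a *\<^sub>C y) = cnj a * cinner (x::'a::complex_inner) y"
proof -
  have "cinner x (a *\<^sub>C y) = cnj (cinner (a *\<^sub>C y) x)" by (rule cinner_commute)
  also have "\<dots> = cnj a * cnj (cinner y x)" by (simp only: cinner_scaleC_left complex_cnj_mult)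
  also have "\<dots> = cnj a * cinner x y" by (simp only: cinner_commute[of x y] complex_cnj_cnj)
  finally show ?thesis .
qed
lemma cinner_zero_left[simp]: "cinner 0 (y::'a::complex_inner) = 0"
  using cinner_add_left[of 0 0 y] by simp
lemma cinner_zero_right[simp]: "cinner (y::'a::complex_inner) 0 = 0"
  using cinner_add_right[of y 0 0] by simp
lemma cinner_minus_left: "cinner (- x) (y::'a::complex_inner) = - cinner x y"
  using cinner_add_left[of x "-x" y] by (simp add: add_eq_0_iff)
lemma cinner_minus_right: "cinner y (- x::'a::complex_inner) = - cinner y x"
  using cinner_add_right[of y x "-x"] by (simp add: add_eq_0_iff)
lemma cinner_diff_left: "cinner (x - z) (y::'a::complex_inner) = cinner x y - cinner z y"
  by (simp only: cinner_add_left cinner_minus_left diff_conv_add_uminus)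
lemma cinner_diff_right: "cinner y (x - z::'a::complex_inner) = cinner y x - cinner y z"
  by (simp only: cinner_add_right cinner_minus_right diff_conv_add_uminus)

lemma norm_sq_cinner: "(norm (x::'a::complex_inner))^2 = Re (cinner x x)"
  by (simp add: norm_eq_sqrt_cinner cinner_ge_zero)
lemma cinner_self: "cinner x (x::'a::complex_inner) = complex_of_real ((norm x)^2)"
  by (simp add: norm_sq_cinner complex_eq_iff cinner_ge_zero)
lemma cinner_self_zero: "cinner x x = 0 \<longleftrightarrow> (x::'a::complex_inner) = 0"
  by (simp add: cinner_eq_zero_iff)

lemma norm_scaleC: "norm (a *\<^sub>C (x::'a::complex_inner)) = cmod a * norm x"
proof -
  have "(norm (a *\<^sub>C x))^2 = (cmod a * norm x)^2"
  proof -
    have "cinner (a *\<^sub>C x) (a *\<^sub>C x) = (a * cnj a) * cinner x x"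
      by (simp only: cinner_scaleC_left cinner_scaleC_right mult_ac)
    also have "\<dots> = (a * cnj a) * complex_of_real ((norm x)^2)" by (simp only: cinner_self)
    also have "\<dots> = complex_of_real ((cmod a * norm x)^2)"
      by (simp add: complex_norm_square[symmetric] power_mult_distrib)
    finally have c: "cinner (a *\<^sub>C x) (a *\<^sub>C x) = complex_of_real ((cmod a * norm x)^2)" .
    show ?thesis using norm_sq_cinner[of "a *\<^sub>C x"] unfolding c by simp
  qed
  then show ?thesis by (simp add: power2_eq_iff_nonneg)
qed

lemma re_cnj: "Re (cnj z) = Re z" by simp
lemma re_ofreal_mult: "Re (complex_of_real r * z) = r * Re z" by simp

lemma norm_expand: "(norm (x - t *\<^sub>C y))^2 = (norm x)^2 - 2 * Re (cnj t * cinner x y) + (cmod t)^2 * (norm (y::'a::complex_inner))^2"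
proof -
  have "t * cinner y x = cnj (cnj t * cinner x y)"
    by (metis cinner_commute complex_cnj_cnj complex_cnj_mult)
  then have e: "Re (t * cinner y x) = Re (cnj t * cinner x y)" by (metis re_cnj)
  have "cinner (x - t *\<^sub>C y) (x - t *\<^sub>C y) = cinner x x - cnj t * cinner x y - t * cinner y x + t * cnj t * cinner y y"
    by (simp add: cinner_diff_left cinner_diff_right cinner_scaleC_left cinner_scaleC_right algebra_simps)
  moreover have "t * cnj t = complex_of_real ((cmod t)^2)" by (metis complex_norm_square)
  ultimately have "cinner (x - t *\<^sub>C y) (x - t *\<^sub>C y) = cinner x x - cnj t * cinner x y - t * cinner y x + complex_of_real ((cmod t)^2) * cinner y y"
    by (simp only:)
  then have "Re (cinner (x - t *\<^sub>C y) (x - t *\<^sub>C y)) = Re (cinner x x) - Re (cnj t * cinner x y) - Re (t * cinner y x) + (cmod t)^2 * Re (cinner y y)"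
    by (simp only: minus_complex.sel plus_complex.sel Re_complex_of_real re_ofreal_mult)
  then have "Re (cinner (x - t *\<^sub>C y) (x - t *\<^sub>C y)) = Re (cinner x x) - 2 * Re (cnj t * cinner x y) + (cmod t)^2 * Re (cinner y y)"
    by (simp only: e)
  then show ?thesis
    by (simp only: norm_sq_cinner)
qed

lemma norm_add_sq: "(norm (x + y))^2 = (norm x)^2 + (norm y)^2 + 2 * Re (cinner x (y::'a::complex_inner))"
proof -
  have e: "Re (cinner y x) = Re (cinner x y)"
    by (subst cinner_commute) simp
  show ?thesis unfolding norm_sq_cinner using e
    by (simp add: cinner_add_left cinner_add_right)
qed

lemma cauchy_schwarz: "cmod (cinner x y) \<le> norm x * norm (y::'a::complex_inner)"
proof (cases "y = 0")
  case True then show ?thesis by simp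
next
  case False
  then have ny: "norm y > 0" by simp
  define p where "p = cinner x y"
  define t where "t = p / complex_of_real ((norm y)^2)"
  have "0 \<le> (norm (x - t *\<^sub>C y))^2" by simp
  also have "\<dots> = (norm x)^2 - (cmod p)^2 / (norm y)^2"
  proof -
    have "cnj t * p = complex_of_real ((cmod p)^2 / (norm y)^2)"
      unfolding t_def by (simp add: complex_norm_square[symmetric] mult.commute)
    moreover have "cmod t = cmod p / (norm y)^2" unfolding t_def by (simp add: norm_divide norm_power)
    ultimately have e1: "Re (cnj t * p) = (cmod p)^2 / (norm y)^2" and e2: "cmod t = cmod p / (norm y)^2"
      by simp_all
    have "(norm (x - t *\<^sub>C y))^2 = (norm x)^2 - 2 * ((cmod p)^2 / (norm y)^2) + (cmod p / (norm y)^2)^2 * (norm y)^2"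
      unfolding norm_expand p_def[symmetric] e1 e2 ..
    also have "\<dots> = (norm x)^2 - (cmod p)^2 / (norm y)^2" using ny
      by (simp add: power_divide field_simps power2_eq_square)
    finally show ?thesis .
  qed
  finally have "(cmod p)^2 / (norm y)^2 \<le> (norm x)^2" by simp
  then have "(cmod p)^2 \<le> (norm x)^2 * (norm y)^2" using ny by (simp add: pos_divide_le_eq)
  then have "(cmod p)^2 \<le> (norm x * norm y)^2" by (simp only: power_mult_distrib)
  then have "cmod p \<le> norm x * norm y" by (rule power2_le_imp_le) simp
  then show ?thesis unfolding p_def .
qed

lemma bounded_bilinear_cinner: "bounded_bilinear (cinner :: 'a::complex_inner \<Rightarrow> 'a \<Rightarrow> complex)"
proof
  fix a a' b b' :: 'a and r :: real
  show "cinner (a + a') b = cinner a b + cinner a' b" by (rule cinner_add_left)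
  show "cinner a (b + b') = cinner a b + cinner a b'" by (rule cinner_add_right)
  show "cinner (r *\<^sub>R a) b = r *\<^sub>R cinner a b"
    by (simp add: scaleR_scaleC cinner_scaleC_left scaleR_conv_of_real)
  show "cinner a (r *\<^sub>R b) = r *\<^sub>R cinner a b"
    by (simp add: scaleR_scaleC cinner_scaleC_right scaleR_conv_of_real)
next
  show "\<exists>K. \<forall>a b. norm (cinner a b) \<le> norm a * norm (b::'a) * K"
  proof (intro exI allI)
    fix a b :: 'a
    show "norm (cinner a b) \<le> norm a * norm b * 1" using cauchy_schwarz[of a b] by (simp only: mult_1_right)
  qed
qed

lemma bounded_linear_scaleC: "bounded_linear (\<lambda>x::'a::complex_inner. c *\<^sub>C x)"
proof
  fix x y :: 'a and r :: real
  show "c *\<^sub>C (x + y) = c *\<^sub>C x + c *\<^sub>C y" by (rule scaleC_add_right)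
  show "c *\<^sub>C (r *\<^sub>R x) = r *\<^sub>R (c *\<^sub>C x)"
    by (simp add: scaleR_scaleC scaleC_scaleC mult.commute)
  show "\<exists>K. \<forall>x. norm (c *\<^sub>C (x::'a)) \<le> norm x * K"
  proof (intro exI allI)
    fix x :: 'a
    show "norm (c *\<^sub>C x) \<le> norm x * cmod c" by (simp only: norm_scaleC mult.commute order.refl)
  qed
qed




lemma parallelogram: "(norm (a + b))^2 + (norm (a - b))^2 = 2 * (norm a)^2 + 2 * (norm (b::'a::complex_inner))^2"
  using norm_add_sq[of a b] norm_add_sq[of a "-b"] by (simp add: cinner_minus_right)

lemma scaleR_mem: assumes "\<And>c x. x \<in> M \<Longrightarrow> c *\<^sub>C x \<in> M" "x \<in> M" shows "r *\<^sub>R (x::'a::complex_vector) \<in> M"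
  using assms by (simp add: scaleR_scaleC)

lemma closest_point_exists:
  fixes M :: "'a::chilbert_space set"
  assumes cl: "closed M" and z: "0 \<in> M" and add: "\<And>x y. x \<in> M \<Longrightarrow> y \<in> M \<Longrightarrow> x + y \<in> M"
    and sc: "\<And>c x. x \<in> M \<Longrightarrow> c *\<^sub>C x \<in> M"
  shows "\<exists>L\<in>M. \<forall>m'\<in>M. (norm (v - L))^2 \<le> (norm (v - m'))^2"
proof -
  define D where "D = (\<lambda>m. norm (v - m)) ` M"
  define d where "d = Inf D"
  have bdd: "bdd_below D" unfolding D_def by (rule bdd_belowI[of _ 0]) auto
  have ne: "D \<noteq> {}" using z unfolding D_def by auto
  have dle: "d \<le> norm (v - m')" if "m' \<in> M" for m'
    unfolding d_def D_def using that bdd D_def by (auto intro!: cInf_lower)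
  have d0: "0 \<le> d" using dle[OF z] ne unfolding d_def D_def
    by (auto intro!: cInf_greatest)
  have "\<exists>m\<in>M. (norm (v - m))^2 < d^2 + inverse (real (Suc n))" for n
  proof -
    have "d = sqrt (d^2)" using d0 by simp
    also have "\<dots> < sqrt (d^2 + inverse (real (Suc n)))" by (intro real_sqrt_less_mono) simp
    finally have "d < sqrt (d^2 + inverse (real (Suc n)))" .
    then obtain y where "y \<in> D" "y < sqrt (d^2 + inverse (real (Suc n)))"
      using cInf_lessD[OF ne] unfolding d_def by blast
    then obtain m where m: "m \<in> M" "norm (v - m) < sqrt (d^2 + inverse (real (Suc n)))"
      unfolding D_def by auto
    then have "(norm (v - m))^2 < (sqrt (d^2 + inverse (real (Suc n))))^2"
      by (intro power_strict_mono) simp_all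
    also have "\<dots> = d^2 + inverse (real (Suc n))" by (intro real_sqrt_pow2) simp
    finally have "(norm (v - m))^2 < d^2 + inverse (real (Suc n))" .
    with m show ?thesis by blast
  qed
  then obtain ms where ms: "\<And>n. ms n \<in> M" "\<And>n. (norm (v - ms n))^2 < d^2 + inverse (real (Suc n))"
    by metis
  have key: "(norm (ms k - ms n))^2 \<le> 2 * inverse (real (Suc n)) + 2 * inverse (real (Suc k))" for n k
  proof -
    define mid where "mid = (1/2::real) *\<^sub>R (ms n + ms k)"
    have midM: "mid \<in> M" unfolding mid_def by (intro scaleR_mem[OF sc] add ms)
    have "(v - ms n) + (v - ms k) = 2 *\<^sub>R (v - mid)" unfolding mid_def
      by (simp add: algebra_simps scaleR_2)
    then have "(norm ((v - ms n) + (v - ms k)))^2 = 4 * (norm (v - mid))^2"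
      by (simp add: power_mult_distrib)
    moreover have "(norm (v - mid))^2 \<ge> d^2" using dle[OF midM] d0 by (simp add: power_mono)
    moreover have "(v - ms n) - (v - ms k) = ms k - ms n" by simp
    then have "(norm ((v - ms n) + (v - ms k)))^2 + (norm (ms k - ms n))^2 = 2 * (norm (v - ms n))^2 + 2 * (norm (v - ms k))^2"
      using parallelogram[of "v - ms n" "v - ms k"] by simp
    ultimately show ?thesis using ms(2)[of n] ms(2)[of k] by linarith
  qed
  have "Cauchy ms"
  proof (rule metric_CauchyI)
    fix e :: real assume e: "0 < e"
    obtain N :: nat where N: "4 / e^2 < real N" using reals_Archimedean2 by blast
    have e2: "0 < e^2" using e by simp
    have "4 < real N * e^2" using N e2 by (simp add: pos_divide_less_eq)
    moreover have "e^2 * real (Suc N) = e^2 + real N * e^2" by (simp add: algebra_simps)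
    ultimately have "4 < e^2 * real (Suc N)" using e2 by linarith
    then have N': "4 * inverse (real (Suc N)) < e^2" by (simp add: field_simps)
    show "\<exists>N. \<forall>m\<ge>N. \<forall>n\<ge>N. dist (ms m) (ms n) < e"
    proof (intro exI allI impI)
      fix m n assume mn: "N \<le> m" "N \<le> n"
      have i1: "inverse (real (Suc m)) \<le> inverse (real (Suc N))" using mn by (simp add: le_imp_inverse_le)
      have i2: "inverse (real (Suc n)) \<le> inverse (real (Suc N))" using mn by (simp add: le_imp_inverse_le)
      have sym: "(norm (ms m - ms n))^2 = (norm (ms n - ms m))^2" by (simp only: norm_minus_commute)
      have "(norm (ms m - ms n))^2 < e^2" using key[of n m] key[of m n] sym i1 i2 N' by linarith
      then have "(dist (ms m) (ms n))^2 < e^2" by (simp only: dist_norm)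
      then show "dist (ms m) (ms n) < e" using e by (simp add: power_less_imp_less_base less_imp_le)
    qed
  qed
  then obtain L where L: "ms \<longlonglongrightarrow> L" using Cauchy_convergent convergent_def by blast
  have LM: "L \<in> M" using cl L ms(1) closed_sequential_limits by blast
  have "(norm (v - L))^2 \<le> (norm (v - m'))^2" if m': "m' \<in> M" for m'
  proof (rule LIMSEQ_le)
    show "(\<lambda>n. (norm (v - ms n))^2) \<longlonglongrightarrow> (norm (v - L))^2" by (intro tendsto_intros L)
    show "(\<lambda>n. (norm (v - m'))^2 + inverse (real (Suc n))) \<longlonglongrightarrow> (norm (v - m'))^2"
      using tendsto_add[OF tendsto_const LIMSEQ_inverse_real_of_nat] by simp
    show "\<exists>N. \<forall>n\<ge>N. (norm (v - ms n))^2 \<le> (norm (v - m'))^2 + inverse (real (Suc n))"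
    proof (intro exI allI impI)
      fix n :: nat
      have "d^2 \<le> (norm (v - m'))^2" using dle[OF m'] d0 by (intro power_mono) simp_all
      then show "(norm (v - ms n))^2 \<le> (norm (v - m'))^2 + inverse (real (Suc n))"
        using ms(2)[of n] by linarith
    qed
  qed
  with LM show ?thesis by blast
qed

lemma projection:
  fixes M :: "'a::chilbert_space set"
  assumes cl: "closed M" and z: "0 \<in> M" and add: "\<And>x y. x \<in> M \<Longrightarrow> y \<in> M \<Longrightarrow> x + y \<in> M"
    and sc: "\<And>c x. x \<in> M \<Longrightarrow> c *\<^sub>C x \<in> M"
  shows "\<exists>L\<in>M. \<forall>u\<in>M. cinner (v - L) u = 0"
proof -
  obtain L where LM: "L \<in> M" and min: "\<And>m'. m' \<in> M \<Longrightarrow> (norm (v - L))^2 \<le> (norm (v - m'))^2"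
    using closest_point_exists[OF assms] by blast
  have "cinner (v - L) u = 0" if u: "u \<in> M" for u
  proof (rule ccontr)
    define w where "w = v - L"
    define p where "p = cinner w u"
    assume "cinner (v - L) u \<noteq> 0"
    then have p0: "p \<noteq> 0" unfolding p_def w_def .
    define \<epsilon> where "\<epsilon> = 1 / ((norm u)^2 + 1)"
    have e0: "\<epsilon> > 0" unfolding \<epsilon>_def by (simp add: add_nonneg_pos)
    define t where "t = complex_of_real \<epsilon> * p"
    have "L + t *\<^sub>C u \<in> M" by (intro add LM sc u)
    from min[OF this] have "(norm w)^2 \<le> (norm (w - t *\<^sub>C u))^2"
      unfolding w_def by (simp add: algebra_simps)
    also have "\<dots> = (norm w)^2 - 2 * (\<epsilon> * (cmod p)^2) + (\<epsilon> * cmod p)^2 * (norm u)^2"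
    proof -
      have "cnj t * p = complex_of_real (\<epsilon> * (cmod p)^2)"
      proof -
        have pp: "cnj p * p = complex_of_real ((cmod p)^2)"
          using complex_norm_square[of p] by (simp only: mult.commute)
        show ?thesis unfolding t_def
          by (simp only: complex_cnj_mult complex_cnj_complex_of_real mult.assoc pp of_real_mult)
      qed
      moreover have "cmod t = \<epsilon> * cmod p" unfolding t_def using e0 by (simp add: norm_mult)
      ultimately show ?thesis unfolding norm_expand p_def by simp
    qed
    finally have "2 * (\<epsilon> * (cmod p)^2) \<le> (\<epsilon> * cmod p)^2 * (norm u)^2" by simp
    then have "2 * (\<epsilon> * (cmod p)^2) \<le> (\<epsilon> * (cmod p)^2) * (\<epsilon> * (norm u)^2)"
      by (simp add: power_mult_distrib power2_eq_square mult_ac)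
    moreover have "\<epsilon> * (cmod p)^2 > 0" using e0 p0 by simp
    ultimately have "(\<epsilon> * (cmod p)^2) * 2 \<le> (\<epsilon> * (cmod p)^2) * (\<epsilon> * (norm u)^2)"
      and pos: "\<epsilon> * (cmod p)^2 > 0" by linarith+
    then have "2 \<le> \<epsilon> * (norm u)^2" by (simp only: mult_le_cancel_left_pos)
    moreover have "\<epsilon> * (norm u)^2 < 1"
    proof -
      have hpos: "0 < (norm u)^2 + 1" by (simp add: add_nonneg_pos)
      have "\<epsilon> * (norm u)^2 = (norm u)^2 / ((norm u)^2 + 1)" unfolding \<epsilon>_def by simp
      also have "\<dots> < 1" using hpos by (simp add: divide_less_eq)
      finally show ?thesis .
    qed
    ultimately show False by simp
  qed
  with LM show ?thesis by blast
qed




lemma lin_zero: "lin_subspace T \<Longrightarrow> (0, 0) \<in> T"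
  unfolding lin_subspace_def by blast
lemma lin_add: "lin_subspace T \<Longrightarrow> (x, f) \<in> T \<Longrightarrow> (y, g) \<in> T \<Longrightarrow> (x + y, f + g) \<in> T"
  unfolding lin_subspace_def by blast
lemma lin_scale: "lin_subspace T \<Longrightarrow> (x, f) \<in> T \<Longrightarrow> (c *\<^sub>C x, c *\<^sub>C f) \<in> T"
  unfolding lin_subspace_def by blast
lemma lin_diff:
  assumes "lin_subspace T" "(x, f) \<in> T" "(y, g) \<in> T" shows "(x - y, f - g) \<in> T"
proof -
  have "((-1) *\<^sub>C y, (-1) *\<^sub>C g) \<in> T" by (rule lin_scale[OF assms(1,3)])
  then have "(- y, - g) \<in> T" by (simp only: scaleC_minus1)
  from lin_add[OF assms(1,2) this] show ?thesis by (simp only: diff_conv_add_uminus)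
qed

lemma radj_lin: "lin_subspace (radj (T::('a::complex_inner \<times> 'a) set))"
  unfolding lin_subspace_def radj_def
  by (auto simp: cinner_add_left cinner_add_right cinner_scaleC_left cinner_scaleC_right)

lemma radj_closed: "closed (radj (T::('a::complex_inner \<times> 'a) set))"
proof -
  have eq: "radj T = (\<Inter>p\<in>T. {q. cinner (snd q) (fst p) = cinner (fst q) (snd p)})"
    unfolding radj_def by auto (metis fst_conv snd_conv)
  have bl: "bounded_bilinear (cinner :: 'a \<Rightarrow> 'a \<Rightarrow> complex)" by (rule bounded_bilinear_cinner)
  show ?thesis unfolding eq
  proof (intro closed_INT ballI closed_Collect_eq linear_continuous_on)
    fix p :: "'a \<times> 'a"
    show "bounded_linear (\<lambda>q::'a\<times>'a. cinner (snd q) (fst p))"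
      by (rule bounded_linear_compose[OF bounded_bilinear.bounded_linear_left[OF bl] bounded_linear_snd])
    show "bounded_linear (\<lambda>q::'a\<times>'a. cinner (fst q) (snd p))"
      by (rule bounded_linear_compose[OF bounded_bilinear.bounded_linear_left[OF bl] bounded_linear_fst])
  qed
qed

lemma iso:
  assumes herm: "\<And>x f y g. (x, f) \<in> S \<Longrightarrow> (y, g) \<in> S \<Longrightarrow> cinner g x = cinner y f"
    and xf: "(x, f) \<in> S"
  shows "(norm (f + Complex 0 \<mu> *\<^sub>C x))^2 = (norm f)^2 + \<mu>^2 * (norm (x::'a::complex_inner))^2"
proof -
  have "cinner f x = cinner x f" using herm[OF xf xf] .
  also have "\<dots> = cnj (cinner f x)" by (rule cinner_commute)
  finally have im: "Im (cinner f x) = 0" by (metis complex_cnj_cancel_iff Im_complex_of_real Reals_cnj_iff complex_is_Real_iff)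
  have "Re (cinner f (Complex 0 \<mu> *\<^sub>C x)) = \<mu> * Im (cinner f x)"
    by (simp add: cinner_scaleC_right)
  then have re0: "Re (cinner f (Complex 0 \<mu> *\<^sub>C x)) = 0" using im by simp
  have n: "norm (Complex 0 \<mu> *\<^sub>C x) = \<bar>\<mu>\<bar> * norm x" by (simp add: norm_scaleC norm_complex_def)
  show ?thesis unfolding norm_add_sq re0 n by (simp add: power_mult_distrib)
qed

lemma sa_herm: "self_adjoint S \<Longrightarrow> (x, f) \<in> S \<Longrightarrow> (y, g) \<in> S \<Longrightarrow> cinner g x = cinner y f"
  unfolding self_adjoint_def radj_def by blast

lemma sa_lin: "self_adjoint S \<Longrightarrow> lin_subspace S"
  unfolding self_adjoint_def by blast

lemma sa_closed: "self_adjoint (S::('a::complex_inner \<times> 'a) set) \<Longrightarrow> closed S"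
  unfolding self_adjoint_def using radj_closed by metis

lemma cauchy_dom:
  fixes w :: "nat \<Rightarrow> 'a::real_normed_vector" and u :: "nat \<Rightarrow> 'b::real_normed_vector"
  assumes w: "Cauchy w" and K: "0 \<le> K" and le: "\<And>m n. norm (u m - u n) \<le> K * norm (w m - w n)"
  shows "Cauchy u"
proof (rule metric_CauchyI)
  fix e :: real assume e: "0 < e"
  have "e / (K + 1) > 0" using e K by simp
  from metric_CauchyD[OF w this] obtain N where N: "\<And>m n. m \<ge> N \<Longrightarrow> n \<ge> N \<Longrightarrow> dist (w m) (w n) < e / (K + 1)"
    by blast
  show "\<exists>N. \<forall>m\<ge>N. \<forall>n\<ge>N. dist (u m) (u n) < e"
  proof (intro exI allI impI)
    fix m n assume mn: "N \<le> m" "N \<le> n"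
    have "norm (w m - w n) < e / (K + 1)" using N[OF mn] by (simp add: dist_norm)
    then have "K * norm (w m - w n) \<le> K * (e / (K + 1))" using K by (intro mult_left_mono) simp_all
    also have "\<dots> < e" using K e by (simp add: field_simps)
    finally show "dist (u m) (u n) < e" using le[of m n] by (simp add: dist_norm)
  qed
qed

lemma diff_bounds:
  fixes S :: "('a::complex_inner \<times> 'a) set"
  assumes sa: "self_adjoint S" and mu: "\<mu> \<noteq> 0" and xf: "(x, f) \<in> S"
  shows "norm f \<le> norm (f + Complex 0 \<mu> *\<^sub>C x)" and "norm x \<le> norm (f + Complex 0 \<mu> *\<^sub>C x) / \<bar>\<mu>\<bar>"
proof -
  have i: "(norm (f + Complex 0 \<mu> *\<^sub>C x))^2 = (norm f)^2 + \<mu>^2 * (norm x)^2"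
    by (rule iso[OF sa_herm[OF sa] xf])
  have "(norm f)^2 \<le> (norm (f + Complex 0 \<mu> *\<^sub>C x))^2" unfolding i by simp
  then show "norm f \<le> norm (f + Complex 0 \<mu> *\<^sub>C x)" by (rule power2_le_imp_le) simp
  have "(\<bar>\<mu>\<bar> * norm x)^2 \<le> (norm (f + Complex 0 \<mu> *\<^sub>C x))^2" unfolding i by (simp add: power_mult_distrib)
  then have "\<bar>\<mu>\<bar> * norm x \<le> norm (f + Complex 0 \<mu> *\<^sub>C x)" by (rule power2_le_imp_le) simp
  then show "norm x \<le> norm (f + Complex 0 \<mu> *\<^sub>C x) / \<bar>\<mu>\<bar>" using mu by (simp add: pos_le_divide_eq mult.commute)
qed

lemma range_closed:
  fixes S :: "('a::chilbert_space \<times> 'a) set"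
  assumes sa: "self_adjoint S" and mu: "\<mu> \<noteq> 0"
  shows "closed {f + Complex 0 \<mu> *\<^sub>C x | x f. (x, f) \<in> S}"
  unfolding closed_sequential_limits
proof (intro allI impI, elim conjE)
  define c where "c = Complex 0 \<mu>"
  fix w l assume w: "\<forall>n. w n \<in> {f + Complex 0 \<mu> *\<^sub>C x | x f. (x, f) \<in> S}" and wl: "w \<longlonglongrightarrow> l"
  have "\<forall>n. \<exists>p. p \<in> S \<and> w n = snd p + c *\<^sub>C fst p"
  proof
    fix n
    from w obtain x f where "(x, f) \<in> S" "w n = f + c *\<^sub>C x" unfolding c_def by blast
    then show "\<exists>p. p \<in> S \<and> w n = snd p + c *\<^sub>C fst p" by (intro exI[of _ "(x, f)"]) simp
  qed
  from choice[OF this] obtain P where "\<forall>n. P n \<in> S \<and> w n = snd (P n) + c *\<^sub>C fst (P n)" by blast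
  then have P: "\<And>n. P n \<in> S" "\<And>n. w n = snd (P n) + c *\<^sub>C fst (P n)" by blast+
  define xs where "xs n = fst (P n)" for n
  define fs where "fs n = snd (P n)" for n
  have S: "(xs n, fs n) \<in> S" for n using P(1)[of n] unfolding xs_def fs_def by simp
  have W: "w n = fs n + c *\<^sub>C xs n" for n using P(2)[of n] unfolding xs_def fs_def by simp
  have D: "(xs m - xs n, fs m - fs n) \<in> S" for m n by (rule lin_diff[OF sa_lin[OF sa] S S])
  have WD: "w m - w n = (fs m - fs n) + c *\<^sub>C (xs m - xs n)" for m n
    unfolding W scaleC_diff_right by (simp add: algebra_simps)
  have Cw: "Cauchy w" using wl by (rule LIMSEQ_imp_Cauchy)
  have "Cauchy fs"
  proof (rule cauchy_dom[OF Cw, of 1])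
    fix m n show "norm (fs m - fs n) \<le> 1 * norm (w m - w n)"
      using diff_bounds(1)[OF sa mu D[of m n]] unfolding WD c_def by simp
  qed simp
  then obtain b where b: "fs \<longlonglongrightarrow> b" using Cauchy_convergent convergent_def by blast
  have "Cauchy xs"
  proof (rule cauchy_dom[OF Cw, of "1 / \<bar>\<mu>\<bar>"])
    fix m n show "norm (xs m - xs n) \<le> 1 / \<bar>\<mu>\<bar> * norm (w m - w n)"
      using diff_bounds(2)[OF sa mu D[of m n]] unfolding WD c_def by simp
  qed simp
  then obtain a where a: "xs \<longlonglongrightarrow> a" using Cauchy_convergent convergent_def by blast
  have tl: "(\<lambda>n. (xs n, fs n)) \<longlonglongrightarrow> (a, b)" using a b by (rule tendsto_Pair)
  have "\<forall>x l. (\<forall>n. x n \<in> S) \<and> x \<longlonglongrightarrow> l \<longrightarrow> l \<in> S"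
    using sa_closed[OF sa] by (simp only: closed_sequential_limits)
  then have "(\<forall>n. (xs n, fs n) \<in> S) \<and> (\<lambda>n. (xs n, fs n)) \<longlonglongrightarrow> (a, b) \<longrightarrow> (a, b) \<in> S"
    by (rule allE[of _ "\<lambda>n. (xs n, fs n)"]) (erule allE[of _ "(a, b)"])
  then have abS: "(a, b) \<in> S" using S tl by blast
  have "(\<lambda>n. fs n + c *\<^sub>C xs n) \<longlonglongrightarrow> b + c *\<^sub>C a"
    by (intro tendsto_add b bounded_linear.tendsto[OF bounded_linear_scaleC] a)
  then have "w \<longlonglongrightarrow> b + c *\<^sub>C a" unfolding W[symmetric] by simp
  with wl have "l = b + c *\<^sub>C a" by (rule LIMSEQ_unique)
  with abS show "l \<in> {f + Complex 0 \<mu> *\<^sub>C x | x f. (x, f) \<in> S}" unfolding c_def by blast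
qed

lemma surjS:
  fixes S :: "('a::chilbert_space \<times> 'a) set"
  assumes sa: "self_adjoint S" and mu: "\<mu> \<noteq> 0"
  shows "\<exists>x f. (x, f) \<in> S \<and> f + Complex 0 \<mu> *\<^sub>C x = v"
proof -
  define c where "c = Complex 0 \<mu>"
  define R where "R = {f + c *\<^sub>C x | x f. (x, f) \<in> S}"
  have lin: "lin_subspace S" by (rule sa_lin[OF sa])
  have cl: "closed R" unfolding R_def c_def by (rule range_closed[OF sa mu])
  have z: "0 \<in> R" unfolding R_def using lin_zero[OF lin] by force
  have ad: "r1 + r2 \<in> R" if r12: "r1 \<in> R" "r2 \<in> R" for r1 r2
  proof -
    obtain x1 f1 x2 f2 where "(x1, f1) \<in> S" "(x2, f2) \<in> S" "r1 = f1 + c *\<^sub>C x1" "r2 = f2 + c *\<^sub>C x2"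
      using r12 unfolding R_def by blast
    moreover then have "(x1 + x2, f1 + f2) \<in> S" using lin_add[OF lin] by blast
    ultimately show ?thesis unfolding R_def
      by (intro CollectI exI[of _ "x1 + x2"] exI[of _ "f1 + f2"]) (simp add: scaleC_add_right algebra_simps)
  qed
  have sc: "a *\<^sub>C r \<in> R" if rR: "r \<in> R" for a r
  proof -
    obtain x f where "(x, f) \<in> S" "r = f + c *\<^sub>C x" using rR unfolding R_def by blast
    moreover then have "(a *\<^sub>C x, a *\<^sub>C f) \<in> S" using lin_scale[OF lin] by blast
    moreover have "a *\<^sub>C (f + c *\<^sub>C x) = a *\<^sub>C f + c *\<^sub>C (a *\<^sub>C x)"
      by (simp add: scaleC_add_right scaleC_scaleC mult.commute)
    ultimately show ?thesis unfolding R_def by blast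
  qed
  obtain L where LR: "L \<in> R" and orth: "\<And>r. r \<in> R \<Longrightarrow> cinner (v - L) r = 0"
    using projection[OF cl z ad sc, of v] by blast
  define u where "u = v - L"
  have "(u, c *\<^sub>C u) \<in> radj S" unfolding radj_def
  proof (intro CollectI case_prodI allI impI)
    fix x f assume xf: "(x, f) \<in> S"
    then have "f + c *\<^sub>C x \<in> R" unfolding R_def by blast
    then have "cinner u (f + c *\<^sub>C x) = 0" using orth unfolding u_def by blast
    then have "cinner u f + cnj c * cinner u x = 0" by (simp add: cinner_add_right cinner_scaleC_right)
    moreover have "cnj c = - c" unfolding c_def by (simp add: complex_eq_iff)
    ultimately show "cinner (c *\<^sub>C u) x = cinner u f" by (simp add: cinner_scaleC_left add_eq_0_iff)
  qed
  then have uS: "(u, c *\<^sub>C u) \<in> S" using sa unfolding self_adjoint_def by blast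
  have "cinner (c *\<^sub>C u) u = cinner u (c *\<^sub>C u)" by (rule sa_herm[OF sa uS uS])
  then have "c * cinner u u = cnj c * cinner u u" by (simp add: cinner_scaleC_left cinner_scaleC_right)
  moreover have "cnj c = - c" unfolding c_def by (simp add: complex_eq_iff)
  moreover have "c \<noteq> 0" unfolding c_def using mu by (simp add: complex_eq_iff)
  ultimately have "cinner u u = 0" by simp
  then have "u = 0" by (simp add: cinner_self_zero)
  then have "v \<in> R" using LR unfolding u_def by simp
  then show ?thesis unfolding R_def c_def by blast
qed




lemma decomp:
  fixes S :: "('a::chilbert_space \<times> 'a) set"
  assumes sa: "self_adjoint S" and xf: "(x, f) \<in> S"
  shows "\<exists>fs. (x, fs) \<in> rop S \<and> norm fs \<le> norm f"
proof -
  have lin: "lin_subspace S" by (rule sa_lin[OF sa])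
  define M0 where "M0 = {g. (0, g) \<in> S}"
  have cl: "closed M0" unfolding closed_sequential_limits
  proof (intro allI impI, elim conjE)
    fix gs l assume gs: "\<forall>n. gs n \<in> M0" and gl: "gs \<longlonglongrightarrow> l"
    have tl: "(\<lambda>n. (0::'a, gs n)) \<longlonglongrightarrow> (0, l)" by (rule tendsto_Pair[OF tendsto_const gl])
    have S: "\<forall>n. (0, gs n) \<in> S" using gs unfolding M0_def by blast
    have "\<forall>x l. (\<forall>n. x n \<in> S) \<and> x \<longlonglongrightarrow> l \<longrightarrow> l \<in> S"
      using sa_closed[OF sa] by (simp only: closed_sequential_limits)
    then have "(\<forall>n. (0, gs n) \<in> S) \<and> (\<lambda>n. (0::'a, gs n)) \<longlonglongrightarrow> (0, l) \<longrightarrow> (0, l) \<in> S"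
      by (rule allE[of _ "\<lambda>n. (0, gs n)"]) (erule allE[of _ "(0, l)"])
    then show "l \<in> M0" using S tl unfolding M0_def by blast
  qed
  have z: "0 \<in> M0" unfolding M0_def using lin_zero[OF lin] by simp
  have ad: "g1 + g2 \<in> M0" if "g1 \<in> M0" "g2 \<in> M0" for g1 g2
    using lin_add[OF lin, of 0 g1 0 g2] that unfolding M0_def by simp
  have sc: "c *\<^sub>C g \<in> M0" if "g \<in> M0" for c g
    using lin_scale[OF lin, of 0 g c] that unfolding M0_def by simp
  obtain m where mM: "m \<in> M0" and orth: "\<And>u. u \<in> M0 \<Longrightarrow> cinner (f - m) u = 0"
    using projection[OF cl z ad sc, of f] by blast
  have m0: "(0, m) \<in> S" using mM unfolding M0_def by simp
  have xfs: "(x, f - m) \<in> S" using lin_diff[OF lin xf m0] by simp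
  have "(x, f - m) \<in> rop S" unfolding rop_def rinf_def
  proof (intro CollectI conjI ballI xfs)
    fix q assume q: "q \<in> {p. p \<in> S \<and> fst p = 0}"
    then have "snd q \<in> M0" unfolding M0_def by (cases q) simp
    then have "cinner (f - m) (snd q) = 0" by (rule orth)
    moreover have "fst q = 0" using q by simp
    ultimately show "pinner (x, f - m) q = 0" unfolding pinner_def by simp
  qed
  moreover have "norm (f - m) \<le> norm f"
  proof -
    have "(norm ((f - m) + m))^2 = (norm (f - m))^2 + (norm m)^2 + 2 * Re (cinner (f - m) m)"
      by (rule norm_add_sq)
    then have "(norm f)^2 = (norm (f - m))^2 + (norm m)^2" using orth[OF mM] by simp
    then have "(norm (f - m))^2 \<le> (norm f)^2" by simp
    then show ?thesis by (rule power2_le_imp_le) simp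
  qed
  ultimately show ?thesis by blast
qed

lemma rop_diff:
  assumes lin: "lin_subspace A" and p1: "(x1, g1) \<in> rop A" and p2: "(x2, g2) \<in> rop A"
  shows "(x1 - x2, g1 - g2) \<in> rop A"
proof -
  have a1: "(x1, g1) \<in> A" and o1: "\<And>q. q \<in> rinf A \<Longrightarrow> pinner (x1, g1) q = 0" using p1 unfolding rop_def by auto
  have a2: "(x2, g2) \<in> A" and o2: "\<And>q. q \<in> rinf A \<Longrightarrow> pinner (x2, g2) q = 0" using p2 unfolding rop_def by auto
  have "pinner (x1 - x2, g1 - g2) q = 0" if q: "q \<in> rinf A" for q
  proof -
    have "pinner (x1 - x2, g1 - g2) q = pinner (x1, g1) q - pinner (x2, g2) q"
      unfolding pinner_def by (simp add: cinner_diff_left)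
    then show ?thesis using o1[OF q] o2[OF q] by simp
  qed
  then show ?thesis unfolding rop_def using lin_diff[OF lin a1 a2] by blast
qed




lemma surjT:
  fixes S A :: "('a::chilbert_space \<times> 'a) set"
  assumes sa: "self_adjoint S" and linA: "lin_subspace A"
    and dom: "rdom (rop S) \<subseteq> rdom (rop A)"
    and bnd: "\<And>x u v. (x, u) \<in> rop A \<Longrightarrow> (x, v) \<in> rop S \<Longrightarrow> norm u \<le> a * norm v + b * norm x"
    and a0: "0 \<le> a" and b0: "0 \<le> b" and mu: "\<mu> \<noteq> 0" and k: "a + b / \<bar>\<mu>\<bar> < 1"
  shows "\<exists>x h. (x, h) \<in> rsum S A \<and> h + Complex 0 \<mu> *\<^sub>C x = v"
proof -
  define c where "c = Complex 0 \<mu>"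
  have lin: "lin_subspace S" by (rule sa_lin[OF sa])
  have ex: "\<exists>p. p \<in> S \<and> snd p + c *\<^sub>C fst p = w" for w
  proof -
    obtain x f where "(x, f) \<in> S" "f + Complex 0 \<mu> *\<^sub>C x = w" using surjS[OF sa mu] by blast
    then show ?thesis unfolding c_def by (intro exI[of _ "(x, f)"]) simp
  qed
  define sol where "sol w = (SOME p. p \<in> S \<and> snd p + c *\<^sub>C fst p = w)" for w
  have sol: "sol w \<in> S \<and> snd (sol w) + c *\<^sub>C fst (sol w) = w" for w
    unfolding sol_def by (rule someI_ex[OF ex])
  have exG: "\<exists>g. (x, g) \<in> rop A" if xf: "(x, f) \<in> S" for x f
  proof -
    obtain fs where "(x, fs) \<in> rop S" using decomp[OF sa xf] by blast
    then have "x \<in> rdom (rop S)" unfolding rdom_def by blast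
    then have "x \<in> rdom (rop A)" using dom by blast
    then show ?thesis unfolding rdom_def by blast
  qed
  define G where "G x = (SOME g. (x, g) \<in> rop A)" for x
  have G: "(x, G x) \<in> rop A" if "(x, f) \<in> S" for x f
    unfolding G_def by (rule someI_ex[OF exG[OF that]])
  define X where "X w = fst (sol w)" for w
  define F where "F w = snd (sol w)" for w
  have XF: "(X w, F w) \<in> S" for w using sol[of w] unfolding X_def F_def by simp
  have XFw: "F w + c *\<^sub>C X w = w" for w using sol[of w] unfolding X_def F_def by simp
  define \<Phi> where "\<Phi> w = v - G (X w)" for w
  define K where "K = a + b / \<bar>\<mu>\<bar>"
  have K0: "0 \<le> K" unfolding K_def using a0 b0 by simp
  have lip: "dist (\<Phi> w1) (\<Phi> w2) \<le> K * dist w1 w2" for w1 w2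
  proof -
    define x1 where "x1 = X w1"
    define x2 where "x2 = X w2"
    define f1 where "f1 = F w1"
    define f2 where "f2 = F w2"
    have S1: "(x1, f1) \<in> S" and S2: "(x2, f2) \<in> S" unfolding x1_def x2_def f1_def f2_def using XF by auto
    have Gd: "(x1 - x2, G x1 - G x2) \<in> rop A" by (rule rop_diff[OF linA G[OF S1] G[OF S2]])
    have Sd: "(x1 - x2, f1 - f2) \<in> S" by (rule lin_diff[OF lin S1 S2])
    obtain fs where fs: "(x1 - x2, fs) \<in> rop S" "norm fs \<le> norm (f1 - f2)" using decomp[OF sa Sd] by blast
    have wd: "(f1 - f2) + c *\<^sub>C (x1 - x2) = w1 - w2"
      using XFw[of w1] XFw[of w2] unfolding x1_def x2_def f1_def f2_def scaleC_diff_right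
      by (simp add: algebra_simps)
    have nf: "norm (f1 - f2) \<le> norm (w1 - w2)" using diff_bounds(1)[OF sa mu Sd] unfolding wd[unfolded c_def] .
    have nx: "norm (x1 - x2) \<le> norm (w1 - w2) / \<bar>\<mu>\<bar>" using diff_bounds(2)[OF sa mu Sd] unfolding wd[unfolded c_def] .
    have "norm (G x1 - G x2) \<le> a * norm fs + b * norm (x1 - x2)" by (rule bnd[OF Gd fs(1)])
    also have "\<dots> \<le> a * norm (w1 - w2) + b * (norm (w1 - w2) / \<bar>\<mu>\<bar>)"
      using fs(2) nf nx a0 b0 by (intro add_mono mult_left_mono) simp_all
    also have "\<dots> = K * norm (w1 - w2)" unfolding K_def by (simp add: algebra_simps)
    finally have "norm (G x1 - G x2) \<le> K * norm (w1 - w2)" .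
    moreover have "dist (\<Phi> w1) (\<Phi> w2) = norm (G x1 - G x2)"
      unfolding \<Phi>_def dist_norm x1_def x2_def by (simp add: norm_minus_commute)
    ultimately show ?thesis by (simp add: dist_norm)
  qed
  have "K < 1" unfolding K_def by (rule k)
  from banach_fix_type[OF K0 this] lip obtain w where w: "\<Phi> w = w" by blast
  have xh: "(X w, F w + G (X w)) \<in> rsum S A"
    unfolding rsum_def using XF[of w] G[OF XF[of w]] unfolding rop_def by blast
  have "F w + G (X w) + c *\<^sub>C X w = v"
  proof -
    have "F w + G (X w) + c *\<^sub>C X w = w + G (X w)" using XFw[of w] by (simp add: algebra_simps)
    also have "\<dots> = v" using w unfolding \<Phi>_def by (metis diff_add_cancel)
    finally show ?thesis .
  qed
  with xh show ?thesis unfolding c_def by blast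
qed




lemma rsum_mem: "(x, h) \<in> rsum S A \<longleftrightarrow> (\<exists>f g. h = f + g \<and> (x, f) \<in> S \<and> (x, g) \<in> A)"
  unfolding rsum_def by blast

theorem theorem4p1:
  fixes S A :: "('a::chilbert_space \<times> 'a) set"
  assumes "self_adjoint S"
    and "lin_subspace A" and "closed A" and "hermitian A"
    and "rdom S \<subseteq> rdom A"
    and "rel_bounded (rop A) (rop S)"
    and "rel_bound (rop A) (rop S) < 1"
  shows "self_adjoint (rsum S A)"
proof -
  note sa = assms(1) and linA = assms(2)
  have linS: "lin_subspace S" by (rule sa_lin[OF sa])
  have hA: "A \<subseteq> radj A" using assms(4) unfolding hermitian_def by blast
  define B where "B = {a. a \<ge> 0 \<and> (\<exists>b\<ge>0. \<forall>x u v. (x, u) \<in> rop A \<longrightarrow> (x, v) \<in> rop S \<longrightarrow>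
       norm u \<le> a * norm v + b * norm x)}"
  have rb: "rel_bound (rop A) (rop S) = Inf B" unfolding rel_bound_def B_def ..
  from assms(6) have dom: "rdom (rop S) \<subseteq> rdom (rop A)"
    and "\<exists>c\<ge>0. \<forall>x u v. (x, u) \<in> rop A \<longrightarrow> (x, v) \<in> rop S \<longrightarrow> norm u \<le> c * (norm x + norm v)"
    unfolding rel_bounded_def by blast+
  then obtain c where c0: "c \<ge> 0" and cb: "\<And>x u v. (x, u) \<in> rop A \<Longrightarrow> (x, v) \<in> rop S \<Longrightarrow> norm u \<le> c * (norm x + norm v)"
    by blast
  have "c \<in> B" unfolding B_def
  proof (intro CollectI conjI c0 exI[of _ c] allI impI)
    fix x u v assume "(x, u) \<in> rop A" "(x, v) \<in> rop S"
    from cb[OF this] show "norm u \<le> c * norm v + c * norm x" by (simp add: algebra_simps)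
  qed
  then have ne: "B \<noteq> {}" by blast
  have "Inf B < 1" using assms(7) rb by simp
  then obtain a where aB: "a \<in> B" and a1: "a < 1" using cInf_lessD[OF ne] by blast
  then obtain b where a0: "0 \<le> a" and b0: "0 \<le> b"
    and bnd: "\<And>x u v. (x, u) \<in> rop A \<Longrightarrow> (x, v) \<in> rop S \<Longrightarrow> norm u \<le> a * norm v + b * norm x"
    unfolding B_def by blast
  define \<mu> where "\<mu> = (b + 1) / (1 - a)"
  have mu0: "\<mu> > 0" unfolding \<mu>_def using a1 b0 by simp
  have k: "a + b / \<bar>\<mu>\<bar> < 1"
  proof -
    have "b / \<bar>\<mu>\<bar> = b * (1 - a) / (b + 1)" using mu0 a1 b0 unfolding \<mu>_def by simp
    also have "\<dots> < 1 - a"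
    proof -
      have "b * (1 - a) < (b + 1) * (1 - a)" using a1 by (intro mult_strict_right_mono) simp_all
      then have "b * (1 - a) < (1 - a) * (b + 1)" by (simp only: mult.commute[of "b + 1"])
      then show ?thesis using b0 by (simp add: pos_divide_less_eq)
    qed
    finally show ?thesis by simp
  qed
  have k2: "a + b / \<bar>- \<mu>\<bar> < 1" using k by simp
  have surj1: "\<exists>x h. (x, h) \<in> rsum S A \<and> h + Complex 0 \<mu> *\<^sub>C x = v" for v
    by (rule surjT[OF sa linA dom bnd a0 b0 _ k]) (use mu0 in simp_all)
  have surj2: "\<exists>x h. (x, h) \<in> rsum S A \<and> h + Complex 0 (- \<mu>) *\<^sub>C x = v" for v
    by (rule surjT[OF sa linA dom bnd a0 b0 _ k2]) (use mu0 in simp_all)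
  define T where "T = rsum S A"
  have linT: "lin_subspace T" unfolding lin_subspace_def T_def
  proof (intro conjI allI impI)
    show "(0, 0) \<in> rsum S A" unfolding rsum_mem using lin_zero[OF linS] lin_zero[OF linA] by force
  next
    fix x f y g assume "(x, f) \<in> rsum S A" "(y, g) \<in> rsum S A"
    then obtain f1 g1 f2 g2 where "f = f1 + g1" "(x, f1) \<in> S" "(x, g1) \<in> A"
      "g = f2 + g2" "(y, f2) \<in> S" "(y, g2) \<in> A" unfolding rsum_mem by blast
    moreover then have "(x + y, f1 + f2) \<in> S" "(x + y, g1 + g2) \<in> A" using lin_add[OF linS] lin_add[OF linA] by blast+
    moreover have "f1 + g1 + (f2 + g2) = (f1 + f2) + (g1 + g2)" by (simp add: algebra_simps)
    ultimately show "(x + y, f + g) \<in> rsum S A" unfolding rsum_mem by metis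
  next
    fix c x f assume "(x, f) \<in> rsum S A"
    then obtain f1 g1 where "f = f1 + g1" "(x, f1) \<in> S" "(x, g1) \<in> A" unfolding rsum_mem by blast
    moreover then have "(c *\<^sub>C x, c *\<^sub>C f1) \<in> S" "(c *\<^sub>C x, c *\<^sub>C g1) \<in> A" using lin_scale[OF linS] lin_scale[OF linA] by blast+
    ultimately show "(c *\<^sub>C x, c *\<^sub>C f) \<in> rsum S A" unfolding rsum_mem by (metis scaleC_add_right)
  qed
  have hermT: "T \<subseteq> radj T"
  proof
    fix p assume "p \<in> T"
    then obtain y h where p: "p = (y, h)" and "(y, h) \<in> T" by (cases p) auto
    then obtain f' g' where h: "h = f' + g'" and yf: "(y, f') \<in> S" and yg: "(y, g') \<in> A"
      unfolding T_def rsum_mem by blast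
    have "cinner h x = cinner y k" if xk: "(x, k) \<in> T" for x k
    proof -
      obtain f g where k: "k = f + g" and xf: "(x, f) \<in> S" and xg: "(x, g) \<in> A"
        using xk unfolding T_def rsum_mem by blast
      have "cinner f' x = cinner y f" by (rule sa_herm[OF sa xf yf])
      moreover have "cinner g' x = cinner y g" using hA yg xg unfolding radj_def by blast
      ultimately show ?thesis unfolding h k by (simp add: cinner_add_left cinner_add_right)
    qed
    then show "p \<in> radj T" unfolding p radj_def by blast
  qed
  have "radj T \<subseteq> T"
  proof
    fix p assume pT: "p \<in> radj T"
    obtain y h where p: "p = (y, h)" by (cases p)
    define cc where "cc = Complex 0 \<mu>"
    obtain z k where zk: "(z, k) \<in> T" and zkv: "k + cc *\<^sub>C z = h + cc *\<^sub>C y"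
      using surj1[of "h + Complex 0 \<mu> *\<^sub>C y"] unfolding T_def cc_def by blast
    define w where "w = y - z"
    have wh: "(w, h - k) \<in> radj T" unfolding w_def
      by (rule lin_diff[OF radj_lin]) (use pT p hermT zk in auto)
    have hk: "h - k = - (cc *\<^sub>C w)"
    proof -
      have "h - k = cc *\<^sub>C z - cc *\<^sub>C y" using zkv by (simp add: algebra_simps)
      then show ?thesis unfolding w_def scaleC_diff_right by simp
    qed
    obtain x f where xf: "(x, f) \<in> T" and xfw: "f + Complex 0 (- \<mu>) *\<^sub>C x = w"
      using surj2[of w] unfolding T_def by blast
    have "cinner (h - k) x = cinner w f" using wh xf unfolding radj_def by blast
    then have e1: "- cc * cinner w x = cinner w f" unfolding hk by (simp add: cinner_minus_left cinner_scaleC_left)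
    have "cinner w w = cinner w f + cnj (Complex 0 (- \<mu>)) * cinner w x"
      using xfw by (metis cinner_add_right cinner_scaleC_right)
    also have "cnj (Complex 0 (- \<mu>)) = cc" unfolding cc_def by (simp add: complex_eq_iff)
    finally have "cinner w w = cinner w f + cc * cinner w x" .
    then have "cinner w w = 0" unfolding e1[symmetric] by simp
    then have "w = 0" by (simp add: cinner_self_zero)
    then have "y = z" "h = k" using hk unfolding w_def by simp_all
    then show "p \<in> T" using zk p by simp
  qed
  with hermT linT show ?thesis unfolding T_def self_adjoint_def by blast
qed


end
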